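(* Let $m\geq1$ and $n\geq2$. Then the identities satisfied by the semigroup $\mathbb{Z}_m\times N_n^I\times L_2^I\times R_2^I\times A_0^I$ are axiomatized by \[x^{m+n}\approx x^n,\quad x^{m+n-1}yx\approx x^{n-1}yx,\quad x^2yx\approx xyx^2,\quad xyxzx\approx x^2yzx.\]
   Context: $\mathbb{Z}_m$ is the cyclic group of order $m$; $N_n=\langle a\mid a^n=0\rangle$ is the monogenic nilpotent semigroup of order $n$; $L_2$ and $R_2$ are the left zero ($xy=x$) and right zero ($xy=y$) semigroups of order two; $A_0=\langle e,f\mid e^2=e,\ f^2=f,\ ef=0\rangle=\{0,e,f,fe\}$. For a semigroup $S$, $S^I$ is $S$ with an external identity element adjoined. Identities are between words over a countably infinite alphabet of variables. *)

theory Defs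
  imports Main
begin

text \<open>Words over the countably infinite alphabet of variables (indexed by nat)
  are nonempty lists; multiplication in the free semigroup is concatenation.\<close>

type_synonym word = "nat list"

fun evalw :: "('a \<Rightarrow> 'a \<Rightarrow> 'a) \<Rightarrow> (nat \<Rightarrow> 'a) \<Rightarrow> word \<Rightarrow> 'a" where
  "evalw mult \<phi> (x # xs) = foldl (\<lambda>a y. mult a (\<phi> y)) (\<phi> x) xs"
| "evalw mult \<phi> [] = undefined"

definition satisfies :: "'a set \<Rightarrow> ('a \<Rightarrow> 'a \<Rightarrow> 'a) \<Rightarrow> word \<Rightarrow> word \<Rightarrow> bool" where
  "satisfies S mult u v \<longleftrightarrow>
     (\<forall>\<phi>. (\<forall>x. \<phi> x \<in> S) \<longrightarrow> evalw mult \<phi> u = evalw mult \<phi> v)"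

definition substw :: "(nat \<Rightarrow> word) \<Rightarrow> word \<Rightarrow> word" where
  "substw \<sigma> w = concat (map \<sigma> w)"

inductive derivable :: "(word \<times> word) set \<Rightarrow> word \<Rightarrow> word \<Rightarrow> bool" for Sigma where
  ax: "(u, v) \<in> Sigma \<Longrightarrow> derivable Sigma u v"
| refl: "u \<noteq> [] \<Longrightarrow> derivable Sigma u u"
| sym: "derivable Sigma u v \<Longrightarrow> derivable Sigma v u"
| trans: "derivable Sigma u v \<Longrightarrow> derivable Sigma v w \<Longrightarrow> derivable Sigma u w"
| subst: "derivable Sigma u v \<Longrightarrow> (\<forall>x. \<sigma> x \<noteq> []) \<Longrightarrow>
            derivable Sigma (substw \<sigma> u) (substw \<sigma> v)"
| multl: "derivable Sigma u v \<Longrightarrow> w \<noteq> [] \<Longrightarrow> derivable Sigma (w @ u) (w @ v)"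
| multr: "derivable Sigma u v \<Longrightarrow> w \<noteq> [] \<Longrightarrow> derivable Sigma (u @ w) (v @ w)"

definition Zm_mult :: "nat \<Rightarrow> nat \<Rightarrow> nat \<Rightarrow> nat" where
  "Zm_mult m a b = (a + b) mod m"

text \<open>N_n^I: element k (1 \<le> k < n) is a^k, element n is the zero 0 = a^n,
  and element 0 is the adjoined identity I.  Hence the product is min (i+j) n.\<close>
definition NnI_mult :: "nat \<Rightarrow> nat \<Rightarrow> nat \<Rightarrow> nat" where
  "NnI_mult n i j = min (i + j) n"

text \<open>L_2^I and R_2^I on bool option; None is the adjoined identity.\<close>
fun L2I_mult :: "bool option \<Rightarrow> bool option \<Rightarrow> bool option" where
  "L2I_mult None y = y"
| "L2I_mult x None = x"
| "L2I_mult (Some a) (Some b) = Some a"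

fun R2I_mult :: "bool option \<Rightarrow> bool option \<Rightarrow> bool option" where
  "R2I_mult None y = y"
| "R2I_mult x None = x"
| "R2I_mult (Some a) (Some b) = Some b"

text \<open>A_0 = <e,f | e^2=e, f^2=f, ef=0> = {0,e,f,fe}, with identity I adjoined.\<close>
datatype A0I = Z0 | E | F | FE | I

fun A0I_mult :: "A0I \<Rightarrow> A0I \<Rightarrow> A0I" where
  "A0I_mult I y = y"
| "A0I_mult x I = x"
| "A0I_mult Z0 y = Z0"
| "A0I_mult x Z0 = Z0"
| "A0I_mult E E = E"
| "A0I_mult E F = Z0"
| "A0I_mult E FE = Z0"
| "A0I_mult F E = FE"
| "A0I_mult F F = F"
| "A0I_mult F FE = FE"
| "A0I_mult FE E = FE"
| "A0I_mult FE F = Z0"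
| "A0I_mult FE FE = Z0"

type_synonym elt = "nat \<times> nat \<times> bool option \<times> bool option \<times> A0I"

definition prod_carrier :: "nat \<Rightarrow> nat \<Rightarrow> elt set" where
  "prod_carrier m n = {0..<m} \<times> {0..n} \<times> UNIV \<times> UNIV \<times> UNIV"

definition prod_mult :: "nat \<Rightarrow> nat \<Rightarrow> elt \<Rightarrow> elt \<Rightarrow> elt" where
  "prod_mult m n = (\<lambda>(a1, b1, c1, d1, e1) (a2, b2, c2, d2, e2).
     (Zm_mult m a1 a2, NnI_mult n b1 b2, L2I_mult c1 c2, R2I_mult d1 d2, A0I_mult e1 e2))"

section \<open>The identities (variables x = 0, y = 1, z = 2)\<close>

definition Sigma_mn :: "nat \<Rightarrow> nat \<Rightarrow> (word \<times> word) set" where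
  "Sigma_mn m n =
    {(replicate (m + n) 0, replicate n 0),
     (replicate (m + n - 1) 0 @ [1, 0], replicate (n - 1) 0 @ [1, 0]),
     ([0, 0, 1, 0], [0, 1, 0, 0]),
     ([0, 1, 0, 2, 0], [0, 0, 1, 2, 0])}"

end

theory Submission
  imports Defs
begin


lemma foldl_hom:
  assumes "\<And>a b. h (f a b) = f' (h a) (h b)"
  shows "h (foldl (\<lambda>a y. f a (\<phi> y)) acc xs) = foldl (\<lambda>a y. f' a (h (\<phi> y))) (h acc) xs"
  by (induction xs arbitrary: acc) (simp_all add: assms)

lemma evalw_hom:
  assumes "\<And>a b. h (f a b) = f' (h a) (h b)" "w \<noteq> []"
  shows "h (evalw f \<phi> w) = evalw f' (\<lambda>z. h (\<phi> z)) w"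
  using assms(2) by (cases w) (simp_all, rule foldl_hom, rule assms(1))

lemma pm1: "fst (prod_mult m n a b) = Zm_mult m (fst a) (fst b)"
  by (simp add: prod_mult_def split_beta)
lemma pm2: "fst (snd (prod_mult m n a b)) = NnI_mult n (fst (snd a)) (fst (snd b))"
  by (simp add: prod_mult_def split_beta)
lemma pm3: "fst (snd (snd (prod_mult m n a b))) = L2I_mult (fst (snd (snd a))) (fst (snd (snd b)))"
  by (simp add: prod_mult_def split_beta)
lemma pm4: "fst (snd (snd (snd (prod_mult m n a b)))) = R2I_mult (fst (snd (snd (snd a)))) (fst (snd (snd (snd b))))"
  by (simp add: prod_mult_def split_beta)
lemma pm5: "snd (snd (snd (snd (prod_mult m n a b)))) = A0I_mult (snd (snd (snd (snd a)))) (snd (snd (snd (snd b))))"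
  by (simp add: prod_mult_def split_beta)

lemma evalw_components:
  assumes "w \<noteq> []"
  shows "evalw (prod_mult m n) \<phi> w =
    (evalw (Zm_mult m) (\<lambda>z. fst (\<phi> z)) w,
     evalw (NnI_mult n) (\<lambda>z. fst (snd (\<phi> z))) w,
     evalw L2I_mult (\<lambda>z. fst (snd (snd (\<phi> z)))) w,
     evalw R2I_mult (\<lambda>z. fst (snd (snd (snd (\<phi> z))))) w,
     evalw A0I_mult (\<lambda>z. snd (snd (snd (snd (\<phi> z))))) w)"
proof -
  note h1 = evalw_hom[of fst "prod_mult m n" "Zm_mult m", OF pm1 assms]
  note h2 = evalw_hom[of "\<lambda>x. fst (snd x)" "prod_mult m n" "NnI_mult n", OF pm2 assms]
  note h3 = evalw_hom[of "\<lambda>x. fst (snd (snd x))" "prod_mult m n" "L2I_mult", OF pm3 assms]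
  note h4 = evalw_hom[of "\<lambda>x. fst (snd (snd (snd x)))" "prod_mult m n" "R2I_mult", OF pm4 assms]
  note h5 = evalw_hom[of "\<lambda>x. snd (snd (snd (snd x)))" "prod_mult m n" "A0I_mult", OF pm5 assms]
  show ?thesis by (metis h1 h2 h3 h4 h5 prod.collapse)
qed

lemma foldl_Z: "foldl (\<lambda>a y. Zm_mult m a (\<psi> y)) acc xs =
   (if xs = [] then acc else (acc + sum_list (map \<psi> xs)) mod m)"
  by (induction xs arbitrary: acc) (auto simp: Zm_mult_def mod_add_left_eq add.assoc)

lemma evalw_Z: assumes "\<And>z. \<psi> z < m" "w \<noteq> []"
  shows "evalw (Zm_mult m) \<psi> w = sum_list (map \<psi> w) mod m"
  using assms by (cases w) (auto simp: foldl_Z)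

lemma foldl_N: "foldl (\<lambda>a y. NnI_mult n a (\<psi> y)) acc xs =
   (if xs = [] then acc else min (acc + sum_list (map \<psi> xs)) n)"
  by (induction xs arbitrary: acc) (auto simp: NnI_mult_def min_def)

lemma evalw_N: assumes "\<And>z. \<psi> z \<le> n" "w \<noteq> []"
  shows "evalw (NnI_mult n) \<psi> w = min (sum_list (map \<psi> w)) n"
  using assms by (cases w) (auto simp: foldl_N min_def)

lemma L2I_Some: "L2I_mult (Some a) y = Some a"
  by (cases y) auto
lemma R2I_None: "R2I_mult a None = a"
  by (cases a) auto
lemma R2I_Some: "R2I_mult a (Some b) = Some b"
  by (cases a) auto

lemma foldl_L: "foldl (\<lambda>a y. L2I_mult a (\<psi> y)) acc xs =
  (if acc = None then (case filter (\<lambda>z. \<psi> z \<noteq> None) xs of [] \<Rightarrow> None | b # _ \<Rightarrow> \<psi> b) else acc)"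
proof (induction xs arbitrary: acc)
  case Nil then show ?case by simp
next
  case (Cons y xs)
  show ?case
  proof (cases acc)
    case None then show ?thesis using Cons by (cases "\<psi> y") (auto simp: L2I_Some)
  next
    case (Some a) then show ?thesis using Cons by (simp add: L2I_Some)
  qed
qed

lemma evalw_L: "w \<noteq> [] \<Longrightarrow> evalw L2I_mult \<psi> w =
   (case filter (\<lambda>z. \<psi> z \<noteq> None) w of [] \<Rightarrow> None | b # _ \<Rightarrow> \<psi> b)"
  by (cases w) (auto simp: foldl_L split: list.split)

lemma foldl_R: "foldl (\<lambda>a y. R2I_mult a (\<psi> y)) acc xs =
  (if filter (\<lambda>z. \<psi> z \<noteq> None) xs = [] then acc else \<psi> (last (filter (\<lambda>z. \<psi> z \<noteq> None) xs)))"
proof (induction xs arbitrary: acc)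
  case Nil then show ?case by simp
next
  case (Cons y xs)
  show ?case
    using Cons by (cases "\<psi> y") (auto simp: R2I_None R2I_Some)
qed

lemma evalw_R: "w \<noteq> [] \<Longrightarrow> evalw R2I_mult \<psi> w =
   (if filter (\<lambda>z. \<psi> z \<noteq> None) w = [] then None else \<psi> (last (filter (\<lambda>z. \<psi> z \<noteq> None) w)))"
  by (cases w) (auto simp: foldl_R)

fun yx :: "nat \<Rightarrow> nat \<Rightarrow> word \<Rightarrow> bool" where
  "yx y x [] = False"
| "yx y x (a # w) = ((a = y \<and> x \<in> set w) \<or> yx y x w)"

definition st :: "bool \<Rightarrow> bool \<Rightarrow> bool \<Rightarrow> A0I" where
  "st b hf he = (if b then Z0 else if hf \<and> he then FE else if hf then F else if he then E else I)"

lemma foldl_A: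
  assumes "x \<noteq> y"
  shows "foldl (\<lambda>a z. A0I_mult a (if z = x then F else if z = y then E else I)) (st b hf he) xs
    = st (b \<or> yx y x xs \<or> (he \<and> x \<in> set xs)) (hf \<or> x \<in> set xs) (he \<or> y \<in> set xs)"
proof (induction xs arbitrary: b hf he)
  case Nil then show ?case by simp
next
  case (Cons z xs)
  have step: "A0I_mult (st b hf he) (if z = x then F else if z = y then E else I)
     = st (b \<or> (he \<and> z = x)) (hf \<or> z = x) (he \<or> z = y)"
    using assms by (auto simp: st_def)
  show ?case using assms by (simp only: foldl_Cons step Cons) (auto intro!: arg_cong3[where f = st])
qed

lemma evalw_A:
  assumes "x \<noteq> y" "w \<noteq> []"
  shows "evalw A0I_mult (\<lambda>z. if z = x then F else if z = y then E else I) w = Z0 \<longleftrightarrow> yx y x w"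
proof -
  obtain z xs where w: "w = z # xs" using assms(2) by (cases w) auto
  have "(if z = x then F else if z = y then E else I) = st False (z = x) (z = y)"
    using assms by (auto simp: st_def)
  then have "evalw A0I_mult (\<lambda>z. if z = x then F else if z = y then E else I) w
     = st (yx y x xs \<or> (z = y \<and> x \<in> set xs)) (z = x \<or> x \<in> set xs) (z = y \<or> y \<in> set xs)"
    using w foldl_A[OF assms(1)] by simp
  then show ?thesis using w by (auto simp: st_def)
qed



lemma Zm_assoc: "Zm_mult m (Zm_mult m a b) c = Zm_mult m a (Zm_mult m b c)"
  by (simp add: Zm_mult_def mod_add_left_eq mod_add_right_eq add.assoc)
lemma NnI_assoc: "NnI_mult n (NnI_mult n a b) c = NnI_mult n a (NnI_mult n b c)"
  by (simp add: NnI_mult_def min_def)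
lemma L2I_assoc: "L2I_mult (L2I_mult a b) c = L2I_mult a (L2I_mult b c)"
  by (cases a; cases b; cases c) auto
lemma R2I_assoc: "R2I_mult (R2I_mult a b) c = R2I_mult a (R2I_mult b c)"
  by (cases a; cases b; cases c) auto
lemma A0I_assoc: "A0I_mult (A0I_mult a b) c = A0I_mult a (A0I_mult b c)"
  by (cases a; cases b; cases c) auto

lemma prod_assoc: "prod_mult m n (prod_mult m n a b) c = prod_mult m n a (prod_mult m n b c)"
  by (simp add: prod_mult_def split_beta Zm_assoc NnI_assoc L2I_assoc R2I_assoc A0I_assoc)

lemma foldl_assoc:
  assumes "\<And>a b c. f (f a b) c = f a (f b c)"
  shows "foldl (\<lambda>a y. f a (\<phi> y)) (f b c) xs = f b (foldl (\<lambda>a y. f a (\<phi> y)) c xs)"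
  by (induction xs arbitrary: c) (simp_all add: assms)

lemma evalw_append:
  assumes "\<And>a b c. f (f a b) c = f a (f b c)" "u \<noteq> []" "v \<noteq> []"
  shows "evalw f \<phi> (u @ v) = f (evalw f \<phi> u) (evalw f \<phi> v)"
proof -
  obtain x xs where u: "u = x # xs" using assms(2) by (cases u) auto
  obtain y ys where v: "v = y # ys" using assms(3) by (cases v) auto
  show ?thesis using u v by (simp add: foldl_assoc[OF assms(1)])
qed

lemma evalw_subst:
  assumes "\<And>a b c. f (f a b) c = f a (f b c)" "\<forall>x. \<sigma> x \<noteq> []" "u \<noteq> []"
  shows "evalw f \<phi> (substw \<sigma> u) = evalw f (\<lambda>x. evalw f \<phi> (\<sigma> x)) u"
  using assms(3)
proof (induction u rule: list_nonempty_induct)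
  case (single x) then show ?case by (simp add: substw_def)
next
  case (cons x xs)
  have ne: "substw \<sigma> xs \<noteq> []" using cons.hyps assms(2) by (cases xs) (auto simp: substw_def)
  have "evalw f \<phi> (substw \<sigma> (x # xs)) = f (evalw f \<phi> (\<sigma> x)) (evalw f \<phi> (substw \<sigma> xs))"
    using evalw_append[OF assms(1) _ ne] assms(2) by (simp add: substw_def)
  also have "\<dots> = f (evalw f \<phi> (\<sigma> x)) (evalw f (\<lambda>x. evalw f \<phi> (\<sigma> x)) xs)"
    using cons.IH by simp
  also have "\<dots> = evalw f (\<lambda>x. evalw f \<phi> (\<sigma> x)) ([x] @ xs)"
    using evalw_append[OF assms(1), where u="[x]" and v=xs and \<phi>="\<lambda>x. evalw f \<phi> (\<sigma> x)"] cons.hyps by simp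
  finally show ?case by simp
qed

lemma prod_closed: "0 < m \<Longrightarrow> a \<in> prod_carrier m n \<Longrightarrow> b \<in> prod_carrier m n \<Longrightarrow> prod_mult m n a b \<in> prod_carrier m n"
  by (auto simp: prod_carrier_def prod_mult_def split_beta Zm_mult_def NnI_mult_def)

lemma foldl_closed: "0 < m \<Longrightarrow> acc \<in> prod_carrier m n \<Longrightarrow> \<forall>z. \<phi> z \<in> prod_carrier m n \<Longrightarrow>
   foldl (\<lambda>a y. prod_mult m n a (\<phi> y)) acc xs \<in> prod_carrier m n"
  by (induction xs arbitrary: acc) (auto simp: prod_closed)

lemma evalw_closed: "0 < m \<Longrightarrow> \<forall>z. \<phi> z \<in> prod_carrier m n \<Longrightarrow> w \<noteq> [] \<Longrightarrow>
   evalw (prod_mult m n) \<phi> w \<in> prod_carrier m n"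
  by (cases w) (auto simp: foldl_closed)

lemma derivable_ne: "derivable S u v \<Longrightarrow> (\<forall>(a,b)\<in>S. a \<noteq> [] \<and> b \<noteq> []) \<Longrightarrow> u \<noteq> [] \<and> v \<noteq> []"
proof (induction rule: derivable.induct)
  case (subst u v \<sigma>)
  then show ?case by (cases u; cases v) (auto simp: substw_def)
qed auto

lemma satisfies_derivable:
  assumes "0 < m" "\<forall>(a,b)\<in>S. a \<noteq> [] \<and> b \<noteq> [] \<and> satisfies (prod_carrier m n) (prod_mult m n) a b"
    and "derivable S u v"
  shows "satisfies (prod_carrier m n) (prod_mult m n) u v"
  using assms(3)
proof (induction rule: derivable.induct)
  case (ax u v) then show ?case using assms(2) by auto
next
  case (refl u) then show ?case by (simp add: satisfies_def)
next
  case (sym u v) then show ?case by (simp add: satisfies_def)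
next
  case (trans u v w) then show ?case by (simp add: satisfies_def)
next
  case (subst u v \<sigma>)
  have ne: "u \<noteq> [] \<and> v \<noteq> []" using derivable_ne[OF subst.hyps(1)] assms(2) by auto
  show ?case unfolding satisfies_def
  proof (intro allI impI)
    fix \<phi> :: "nat \<Rightarrow> elt" assume ph: "\<forall>x. \<phi> x \<in> prod_carrier m n"
    have c: "\<forall>x. evalw (prod_mult m n) \<phi> (\<sigma> x) \<in> prod_carrier m n"
      using evalw_closed[OF assms(1) ph] subst.hyps(2) by auto
    show "evalw (prod_mult m n) \<phi> (substw \<sigma> u) = evalw (prod_mult m n) \<phi> (substw \<sigma> v)"
      using subst.IH c ne subst.hyps(2)
      by (simp add: evalw_subst prod_assoc satisfies_def)
  qed
next
  case (multl u v w)
  have ne: "u \<noteq> [] \<and> v \<noteq> []" using derivable_ne[OF multl.hyps(1)] assms(2) by auto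
  then show ?case using multl by (simp add: satisfies_def evalw_append prod_assoc)
next
  case (multr u v w)
  have ne: "u \<noteq> [] \<and> v \<noteq> []" using derivable_ne[OF multr.hyps(1)] assms(2) by auto
  then show ?case using multr by (simp add: satisfies_def evalw_append prod_assoc)
qed



lemma carrier_comp:
  assumes "\<forall>z. \<phi> z \<in> prod_carrier m n"
  shows "\<And>z. fst (\<phi> z) < m" "\<And>z. fst (snd (\<phi> z)) \<le> n"
  using assms by (auto simp: prod_carrier_def mem_Times_iff)

lemma A_idem3: "A0I_mult (A0I_mult e e) e = A0I_mult e e"
  by (cases e) auto

lemma A_pow: "foldl (\<lambda>a y. A0I_mult a (\<psi> y)) (A0I_mult (\<psi> 0) (\<psi> 0)) (replicate k 0) = A0I_mult (\<psi> 0) (\<psi> 0)"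
  by (induction k) (simp_all add: A_idem3)

lemma A_rep: "evalw A0I_mult \<psi> (replicate (Suc (Suc k)) 0) = A0I_mult (\<psi> 0) (\<psi> 0)"
  by (simp add: A_pow)

lemma A_rep': "2 \<le> k \<Longrightarrow> evalw A0I_mult \<psi> (replicate k 0) = A0I_mult (\<psi> 0) (\<psi> 0)"
  using A_rep[of \<psi> "k - 2"] by (simp add: numeral_2_eq_2 Suc_diff_Suc)

lemma evalw_snoc: "w \<noteq> [] \<Longrightarrow> evalw f \<phi> (w @ [a]) = f (evalw f \<phi> w) (\<phi> a)"
  by (cases w) auto

lemma idem_foldl: "(\<And>e. f e e = e) \<Longrightarrow> foldl (\<lambda>x y. f x (\<psi> y)) (\<psi> a) (replicate k a) = \<psi> a"
  by (induction k) auto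

lemma idem_rep: "(\<And>e. f e e = e) \<Longrightarrow> 1 \<le> k \<Longrightarrow> evalw f \<psi> (replicate k a) = \<psi> a"
  using idem_foldl[of f \<psi> a "k - 1"] by (cases k) auto

lemma L2I_idem: "L2I_mult e e = e" by (cases e) auto
lemma R2I_idem: "R2I_mult e e = e" by (cases e) auto

lemma minmul: "(n::nat) \<le> k \<Longrightarrow> min (k * b) n = (if b = 0 then 0 else n)"
proof (cases b)
  case (Suc c)
  assume "n \<le> k"
  then have "n \<le> k * b" using Suc by (simp add: trans_le_add1)
  then show ?thesis using Suc by simp
qed simp

lemma ax1:
  assumes "1 \<le> m" "2 \<le> n"
  shows "satisfies (prod_carrier m n) (prod_mult m n) (replicate (m + n) 0) (replicate n 0)"
  unfolding satisfies_def
proof (intro allI impI)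
  fix \<phi> :: "nat \<Rightarrow> elt" assume ph: "\<forall>x. \<phi> x \<in> prod_carrier m n"
  note cc = carrier_comp[OF ph]
  have ne: "replicate (m + n) (0::nat) \<noteq> []" "replicate n (0::nat) \<noteq> []" using assms by auto
  have 1: "evalw (Zm_mult m) (\<lambda>z. fst (\<phi> z)) (replicate (m + n) 0) = evalw (Zm_mult m) (\<lambda>z. fst (\<phi> z)) (replicate n 0)"
    using ne by (simp add: evalw_Z cc sum_list_replicate add_mult_distrib)
  have 2: "evalw (NnI_mult n) (\<lambda>z. fst (snd (\<phi> z))) (replicate (m + n) 0) = evalw (NnI_mult n) (\<lambda>z. fst (snd (\<phi> z))) (replicate n 0)"
    using ne assms by (simp add: evalw_N cc sum_list_replicate minmul)
  have 3: "evalw L2I_mult (\<lambda>z. fst (snd (snd (\<phi> z)))) (replicate (m + n) 0) = evalw L2I_mult (\<lambda>z. fst (snd (snd (\<phi> z)))) (replicate n 0)"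
    using ne assms by (simp add: idem_rep L2I_idem)
  have 4: "evalw R2I_mult (\<lambda>z. fst (snd (snd (snd (\<phi> z))))) (replicate (m + n) 0) = evalw R2I_mult (\<lambda>z. fst (snd (snd (snd (\<phi> z))))) (replicate n 0)"
    using ne assms by (simp add: idem_rep R2I_idem)
  have 5: "evalw A0I_mult (\<lambda>z. snd (snd (snd (snd (\<phi> z))))) (replicate (m + n) 0) = evalw A0I_mult (\<lambda>z. snd (snd (snd (snd (\<phi> z))))) (replicate n 0)"
    using assms by (simp add: A_rep')
  show "evalw (prod_mult m n) \<phi> (replicate (m + n) 0) = evalw (prod_mult m n) \<phi> (replicate n 0)"
    using 1 2 3 4 5 by (simp only: evalw_components[OF ne(1)] evalw_components[OF ne(2)])
qed

lemma evalw_snoc2: "w \<noteq> [] \<Longrightarrow> evalw f \<phi> (w @ [a, b]) = f (f (evalw f \<phi> w) (\<phi> a)) (\<phi> b)"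
  using evalw_snoc[of w f \<phi> a] evalw_snoc[of "w @ [a]" f \<phi> b] by simp

lemma A_ax2: "A0I_mult (A0I_mult (A0I_mult e e) y) e = A0I_mult (A0I_mult e y) e"
  by (cases e; cases y) auto

lemma summ: "(n::nat) \<ge> 1 \<Longrightarrow> ((n - 1) * a + c + a) = n * a + c"
  by (cases n) auto

lemma ax2:
  assumes "1 \<le> m" "2 \<le> n"
  shows "satisfies (prod_carrier m n) (prod_mult m n) (replicate (m + n - 1) 0 @ [1, 0]) (replicate (n - 1) 0 @ [1, 0])"
  unfolding satisfies_def
proof (intro allI impI)
  fix \<phi> :: "nat \<Rightarrow> elt" assume ph: "\<forall>x. \<phi> x \<in> prod_carrier m n"
  note cc = carrier_comp[OF ph]
  let ?u = "replicate (m + n - 1) (0::nat) @ [1, 0]" and ?v = "replicate (n - 1) (0::nat) @ [1, 0]"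
  have ne: "?u \<noteq> []" "?v \<noteq> []" "replicate (m + n - 1) (0::nat) \<noteq> []" "replicate (n - 1) (0::nat) \<noteq> []" using assms by auto
  have mn: "m + n - 1 = m + (n - 1)" using assms by simp
  have 1: "evalw (Zm_mult m) (\<lambda>z. fst (\<phi> z)) ?u = evalw (Zm_mult m) (\<lambda>z. fst (\<phi> z)) ?v"
  proof -
    have key: "((m + n - 1) * a + c) mod m = ((n - 1) * a + c) mod m" for a c :: nat
    proof -
      have "(m + n - 1) * a + c = m * a + ((n - 1) * a + c)" unfolding mn by (simp add: add_mult_distrib)
      then show ?thesis by (simp add: add.assoc)
    qed
    show ?thesis using ne key by (simp add: evalw_Z cc sum_list_replicate)
  qed
  have 2: "evalw (NnI_mult n) (\<lambda>z. fst (snd (\<phi> z))) ?u = evalw (NnI_mult n) (\<lambda>z. fst (snd (\<phi> z))) ?v"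
  proof (cases "fst (snd (\<phi> 0)) = 0")
    case True then show ?thesis using ne by (simp add: evalw_N cc sum_list_replicate)
  next
    case False
    define b where "b = fst (snd (\<phi> 0))"
    obtain t where t: "m + n = Suc t" using assms by (cases "m + n") auto
    have s1: "(m + n - 1) * b + b = (m + n) * b" using t by simp
    have "m + n \<le> (m + n) * b" using False unfolding b_def by (cases "fst (snd (\<phi> 0))") auto
    then have g1: "n \<le> (m + n - 1) * b + (fst (snd (\<phi> 1)) + b)" using s1 by linarith
    obtain t' where t': "n = Suc t'" using assms by (cases n) auto
    have s2: "(n - 1) * b + b = n * b" using t' by simp
    have "n \<le> n * b" using False unfolding b_def by (cases "fst (snd (\<phi> 0))") auto
    then have g2: "n \<le> (n - 1) * b + (fst (snd (\<phi> 1)) + b)" using s2 by linarith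
    have "evalw (NnI_mult n) (\<lambda>z. fst (snd (\<phi> z))) ?u = min ((m + n - 1) * b + (fst (snd (\<phi> 1)) + b)) n"
      using ne unfolding b_def by (simp add: evalw_N cc sum_list_replicate)
    also have "\<dots> = n" using g1 by simp
    also have "\<dots> = min ((n - 1) * b + (fst (snd (\<phi> 1)) + b)) n" using g2 by simp
    also have "\<dots> = evalw (NnI_mult n) (\<lambda>z. fst (snd (\<phi> z))) ?v"
      using ne unfolding b_def by (simp add: evalw_N cc sum_list_replicate)
    finally show ?thesis .
  qed
  have 3: "evalw L2I_mult (\<lambda>z. fst (snd (snd (\<phi> z)))) ?u = evalw L2I_mult (\<lambda>z. fst (snd (snd (\<phi> z)))) ?v"
    using ne assms by (simp add: evalw_snoc2 idem_rep L2I_idem)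
  have 4: "evalw R2I_mult (\<lambda>z. fst (snd (snd (snd (\<phi> z))))) ?u = evalw R2I_mult (\<lambda>z. fst (snd (snd (snd (\<phi> z))))) ?v"
    using ne assms by (simp add: evalw_snoc2 idem_rep R2I_idem)
  have 5: "evalw A0I_mult (\<lambda>z. snd (snd (snd (snd (\<phi> z))))) ?u = evalw A0I_mult (\<lambda>z. snd (snd (snd (snd (\<phi> z))))) ?v"
  proof (cases "n = 2")
    case True
    let ?p = "\<lambda>z. snd (snd (snd (snd (\<phi> z))))"
    have r1: "evalw A0I_mult ?p (replicate (m + n - 1) 0) = A0I_mult (?p 0) (?p 0)"
      by (rule A_rep') (use assms in simp)
    have r2: "replicate (n - 1) (0::nat) = [0]" using True by simp
    show ?thesis unfolding evalw_snoc2[OF ne(3)] evalw_snoc2[OF ne(4)] r1 unfolding r2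
      by (simp add: A_ax2)
  next
    case False then show ?thesis using ne assms by (simp add: evalw_snoc2 A_rep')
  qed
  show "evalw (prod_mult m n) \<phi> ?u = evalw (prod_mult m n) \<phi> ?v"
    using 1 2 3 4 5 by (simp only: evalw_components[OF ne(1)] evalw_components[OF ne(2)])
qed

lemma ax34_gen:
  assumes "1 \<le> m" "2 \<le> n" "u \<noteq> []" "v \<noteq> []"
    and "\<And>\<psi>::nat\<Rightarrow>nat. sum_list (map \<psi> u) = sum_list (map \<psi> v)"
    and "\<And>\<psi>. evalw L2I_mult \<psi> u = evalw L2I_mult \<psi> v"
    and "\<And>\<psi>. evalw R2I_mult \<psi> u = evalw R2I_mult \<psi> v"
    and "\<And>\<psi>. evalw A0I_mult \<psi> u = evalw A0I_mult \<psi> v"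
  shows "satisfies (prod_carrier m n) (prod_mult m n) u v"
  unfolding satisfies_def
proof (intro allI impI)
  fix \<phi> :: "nat \<Rightarrow> elt" assume ph: "\<forall>x. \<phi> x \<in> prod_carrier m n"
  note cc = carrier_comp[OF ph]
  show "evalw (prod_mult m n) \<phi> u = evalw (prod_mult m n) \<phi> v"
    using assms by (simp add: evalw_components evalw_Z evalw_N cc)
qed

lemma ax3:
  assumes "1 \<le> m" "2 \<le> n"
  shows "satisfies (prod_carrier m n) (prod_mult m n) [0, 0, 1, 0] [0, 1, 0, 0]"
proof (rule ax34_gen[OF assms])
  fix \<psi> :: "nat \<Rightarrow> bool option"
  show "evalw L2I_mult \<psi> [0, 0, 1, 0] = evalw L2I_mult \<psi> [0, 1, 0, 0]"
    by (cases "\<psi> 0"; cases "\<psi> 1") auto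
next
  fix \<psi> :: "nat \<Rightarrow> bool option"
  show "evalw R2I_mult \<psi> [0, 0, 1, 0] = evalw R2I_mult \<psi> [0, 1, 0, 0]"
    by (cases "\<psi> 0"; cases "\<psi> 1") auto
next
  fix \<psi> :: "nat \<Rightarrow> A0I"
  show "evalw A0I_mult \<psi> [0, 0, 1, 0] = evalw A0I_mult \<psi> [0, 1, 0, 0]"
    by (cases "\<psi> 0"; cases "\<psi> 1") auto
qed auto

lemma ax4:
  assumes "1 \<le> m" "2 \<le> n"
  shows "satisfies (prod_carrier m n) (prod_mult m n) [0, 1, 0, 2, 0] [0, 0, 1, 2, 0]"
proof (rule ax34_gen[OF assms])
  fix \<psi> :: "nat \<Rightarrow> bool option"
  show "evalw L2I_mult \<psi> [0, 1, 0, 2, 0] = evalw L2I_mult \<psi> [0, 0, 1, 2, 0]"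
    by (cases "\<psi> 0"; cases "\<psi> 1"; cases "\<psi> 2") auto
next
  fix \<psi> :: "nat \<Rightarrow> bool option"
  show "evalw R2I_mult \<psi> [0, 1, 0, 2, 0] = evalw R2I_mult \<psi> [0, 0, 1, 2, 0]"
    by (cases "\<psi> 0"; cases "\<psi> 1"; cases "\<psi> 2") auto
next
  fix \<psi> :: "nat \<Rightarrow> A0I"
  show "evalw A0I_mult \<psi> [0, 1, 0, 2, 0] = evalw A0I_mult \<psi> [0, 0, 1, 2, 0]"
    by (cases "\<psi> 0"; cases "\<psi> 1"; cases "\<psi> 2") auto
qed auto

lemma soundness:
  assumes "1 \<le> m" "2 \<le> n" "derivable (Sigma_mn m n) u v"
  shows "satisfies (prod_carrier m n) (prod_mult m n) u v"
proof (rule satisfies_derivable[OF _ _ assms(3)])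
  show "0 < m" using assms by simp
  show "\<forall>(a, b)\<in>Sigma_mn m n. a \<noteq> [] \<and> b \<noteq> [] \<and> satisfies (prod_carrier m n) (prod_mult m n) a b"
    using assms ax1[OF assms(1,2)] ax2[OF assms(1,2)] ax3[OF assms(1,2)] ax4[OF assms(1,2)]
    by (auto simp: Sigma_mn_def)
qed



definition red :: "nat \<Rightarrow> nat \<Rightarrow> nat \<Rightarrow> nat" where
  "red m n k = (if k < n then k else n + (k - n) mod m)"

lemma red_eq:
  assumes "min a n = min b n" "a mod m = b mod m"
  shows "red m n a = red m n b"
proof (cases "a < n")
  case True then have "a = b" using assms(1) by (auto simp: min_def split: if_splits)
  then show ?thesis by simp
next
  case False
  then have b: "n \<le> b" "n \<le> a" using assms(1) by (auto simp: min_def split: if_splits)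
  obtain a' b' where ab: "a = n + a'" "b = n + b'" using b by (metis le_add_diff_inverse)
  have "a' mod m = b' mod m" using assms(2) unfolding ab nat_mod_eq_iff by (metis add.assoc add_left_cancel)
  then show ?thesis using b ab by (simp add: red_def)
qed

lemma sum_ind: "sum_list (map (\<lambda>z. if z = x then k else 0) w) = count_list w x * (k::nat)"
  by (induction w) auto

lemma extract_count:
  assumes "1 \<le> m" "2 \<le> n" "u \<noteq> []" "v \<noteq> []" "satisfies (prod_carrier m n) (prod_mult m n) u v"
  shows "min (count_list u x) n = min (count_list v x) n \<and> count_list u x mod m = count_list v x mod m"
proof -
  define \<phi> where "\<phi> = (\<lambda>z. if z = x then (1 mod m, 1, None, None, I) else (0::nat, 0::nat, None::bool option, None::bool option, I))"
  have ph: "\<forall>z. \<phi> z \<in> prod_carrier m n" using assms by (auto simp: \<phi>_def prod_carrier_def)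
  have e: "evalw (prod_mult m n) \<phi> u = evalw (prod_mult m n) \<phi> v" using assms(5) ph by (simp add: satisfies_def)
  have f1: "(\<lambda>z. fst (\<phi> z)) = (\<lambda>z. if z = x then 1 mod m else 0)" by (auto simp: \<phi>_def)
  have f2: "(\<lambda>z. fst (snd (\<phi> z))) = (\<lambda>z. if z = x then 1 else 0)" by (auto simp: \<phi>_def)
  have lt: "\<And>z. (if z = x then 1 mod m else 0) < m" "\<And>z. (if z = x then 1 else 0::nat) \<le> n" using assms by auto
  have z: "evalw (Zm_mult m) (\<lambda>z. fst (\<phi> z)) u = evalw (Zm_mult m) (\<lambda>z. fst (\<phi> z)) v"
    and nn: "evalw (NnI_mult n) (\<lambda>z. fst (snd (\<phi> z))) u = evalw (NnI_mult n) (\<lambda>z. fst (snd (\<phi> z))) v"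
    using e by (simp_all add: evalw_components assms(3,4))
  from z have "(count_list u x * (1 mod m)) mod m = (count_list v x * (1 mod m)) mod m"
    using lt assms(3,4) by (simp add: evalw_Z f1 sum_ind)
  then have A: "count_list u x mod m = count_list v x mod m" by (cases "m = 1") (auto simp: mod_mult_right_eq)
  from nn have "min (count_list u x) n = min (count_list v x) n"
    using lt assms(3,4) by (simp add: evalw_N f2 sum_ind)
  with A show ?thesis by simp
qed

lemma filter_pair: "filter (\<lambda>z. (if z = x then Some a else if z = y then Some b else None) \<noteq> None) w
   = filter (\<lambda>z. z = x \<or> z = y) w"
  by (rule filter_cong) auto

lemma hd_inj:
  assumes "(case xs of [] \<Rightarrow> None | b # _ \<Rightarrow> \<psi> b) = (case ys of [] \<Rightarrow> None | b # _ \<Rightarrow> \<psi> b)"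
    "\<forall>b\<in>set xs. \<psi> b \<noteq> None" "\<forall>b\<in>set ys. \<psi> b \<noteq> None"
    "\<forall>b b'. b \<in> set xs \<longrightarrow> b' \<in> set ys \<longrightarrow> \<psi> b = \<psi> b' \<longrightarrow> b = b'"
  shows "hd xs = hd ys"
proof (cases xs)
  case Nil
  show ?thesis
  proof (cases ys)
    case (Cons b l) then show ?thesis using assms(1,3) Nil by simp
  qed (simp add: Nil)
next
  case (Cons b l)
  show ?thesis
  proof (cases ys)
    case Nil then show ?thesis using assms(1,2) \<open>xs = b # l\<close> by simp
  next
    case (Cons b' l')
    then have "\<psi> b = \<psi> b'" using assms(1) \<open>xs = b # l\<close> by simp
    then have "b = b'" using assms(4) \<open>xs = b # l\<close> Cons by simp
    then show ?thesis using Cons \<open>xs = b # l\<close> by simp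
  qed
qed

lemma last_inj:
  assumes "(if xs = [] then None else \<psi> (last xs)) = (if ys = [] then None else \<psi> (last ys))"
    "\<forall>b\<in>set xs. \<psi> b \<noteq> None" "\<forall>b\<in>set ys. \<psi> b \<noteq> None"
    "\<forall>b b'. b \<in> set xs \<longrightarrow> b' \<in> set ys \<longrightarrow> \<psi> b = \<psi> b' \<longrightarrow> b = b'"
  shows "last xs = last ys"
proof (cases "xs = []")
  case True
  show ?thesis
  proof (cases "ys = []")
    case False
    then have "\<psi> (last ys) \<noteq> None" using assms(3) last_in_set[of ys] by blast
    then show ?thesis using assms(1) True False by simp
  qed (simp add: True)
next
  case False
  show ?thesis
  proof (cases "ys = []")
    case True then show ?thesis using assms(1,2) False by simp
  next
    case F2: False
    then have "\<psi> (last xs) = \<psi> (last ys)" using assms(1) False by simp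
    then show ?thesis using assms(4) False F2 by simp
  qed
qed

lemma extract_pair:
  assumes "1 \<le> m" "2 \<le> n" "u \<noteq> []" "v \<noteq> []" "satisfies (prod_carrier m n) (prod_mult m n) u v"
    and "x \<noteq> y"
  shows "hd (filter (\<lambda>z. z = x \<or> z = y) u) = hd (filter (\<lambda>z. z = x \<or> z = y) v)
    \<and> last (filter (\<lambda>z. z = x \<or> z = y) u) = last (filter (\<lambda>z. z = x \<or> z = y) v)
    \<and> (yx y x u \<longleftrightarrow> yx y x v)"
proof -
  define \<phi> where "\<phi> = (\<lambda>z. if z = x then (0::nat, 0::nat, Some True, Some True, F)
      else if z = y then (0, 0, Some False, Some False, E) else (0, 0, None, None, I))"
  have ph: "\<forall>z. \<phi> z \<in> prod_carrier m n" using assms by (auto simp: \<phi>_def prod_carrier_def)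
  have e: "evalw (prod_mult m n) \<phi> u = evalw (prod_mult m n) \<phi> v" using assms(5) ph by (simp add: satisfies_def)
  define \<psi> where "\<psi> = (\<lambda>z. if z = x then Some True else if z = y then Some False else None)"
  have f3: "(\<lambda>z. fst (snd (snd (\<phi> z)))) = \<psi>" by (auto simp: \<phi>_def \<psi>_def)
  have f4: "(\<lambda>z. fst (snd (snd (snd (\<phi> z))))) = \<psi>" by (auto simp: \<phi>_def \<psi>_def)
  have f5: "(\<lambda>z. snd (snd (snd (snd (\<phi> z))))) = (\<lambda>z. if z = x then F else if z = y then E else I)"
    by (auto simp: \<phi>_def)
  have l: "evalw L2I_mult \<psi> u = evalw L2I_mult \<psi> v"
    and r: "evalw R2I_mult \<psi> u = evalw R2I_mult \<psi> v"
    and a: "evalw A0I_mult (\<lambda>z. if z = x then F else if z = y then E else I) u =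
            evalw A0I_mult (\<lambda>z. if z = x then F else if z = y then E else I) v"
    using e unfolding evalw_components[OF assms(3)] evalw_components[OF assms(4)] f3 f4 f5 by simp_all
  have fp: "\<And>w. filter (\<lambda>z. \<psi> z \<noteq> None) w = filter (\<lambda>z. z = x \<or> z = y) w"
    unfolding \<psi>_def by (rule filter_pair)
  let ?P = "\<lambda>z. z = x \<or> z = y"
  have inj: "\<And>b b'. ?P b \<Longrightarrow> ?P b' \<Longrightarrow> \<psi> b = \<psi> b' \<Longrightarrow> b = b'"
    using assms(6) by (auto simp: \<psi>_def split: if_splits)
  have nn: "\<And>b. ?P b \<Longrightarrow> \<psi> b \<noteq> None" by (auto simp: \<psi>_def)
  have H: "hd (filter ?P u) = hd (filter ?P v)"
  proof -
    have "(case filter ?P u of [] \<Rightarrow> None | b # _ \<Rightarrow> \<psi> b) = (case filter ?P v of [] \<Rightarrow> None | b # _ \<Rightarrow> \<psi> b)"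
      using l evalw_L[OF assms(3), of \<psi>] evalw_L[OF assms(4), of \<psi>] unfolding fp by simp
    moreover have "\<forall>b\<in>set (filter ?P u). \<psi> b \<noteq> None"
    proof
      fix b assume "b \<in> set (filter ?P u)"
      then have "?P b" by (simp only: set_filter mem_Collect_eq)
      then show "\<psi> b \<noteq> None" by (rule nn)
    qed
    moreover have "\<forall>b\<in>set (filter ?P v). \<psi> b \<noteq> None"
    proof
      fix b assume "b \<in> set (filter ?P v)"
      then have "?P b" by (simp only: set_filter mem_Collect_eq)
      then show "\<psi> b \<noteq> None" by (rule nn)
    qed
    moreover have "\<forall>b b'. b \<in> set (filter ?P u) \<longrightarrow> b' \<in> set (filter ?P v) \<longrightarrow> \<psi> b = \<psi> b' \<longrightarrow> b = b'"
    proof (intro allI impI)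
      fix b b' assume "b \<in> set (filter ?P u)" "b' \<in> set (filter ?P v)" "\<psi> b = \<psi> b'"
      then show "b = b'" using inj[of b b'] by (simp only: set_filter mem_Collect_eq)
    qed
    ultimately show ?thesis by (rule hd_inj)
  qed
  have L: "last (filter ?P u) = last (filter ?P v)"
  proof -
    have "(if filter ?P u = [] then None else \<psi> (last (filter ?P u))) = (if filter ?P v = [] then None else \<psi> (last (filter ?P v)))"
      using r evalw_R[OF assms(3), of \<psi>] evalw_R[OF assms(4), of \<psi>] unfolding fp by simp
    moreover have "\<forall>b\<in>set (filter ?P u). \<psi> b \<noteq> None"
    proof
      fix b assume "b \<in> set (filter ?P u)"
      then have "?P b" by (simp only: set_filter mem_Collect_eq)
      then show "\<psi> b \<noteq> None" by (rule nn)
    qed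
    moreover have "\<forall>b\<in>set (filter ?P v). \<psi> b \<noteq> None"
    proof
      fix b assume "b \<in> set (filter ?P v)"
      then have "?P b" by (simp only: set_filter mem_Collect_eq)
      then show "\<psi> b \<noteq> None" by (rule nn)
    qed
    moreover have "\<forall>b b'. b \<in> set (filter ?P u) \<longrightarrow> b' \<in> set (filter ?P v) \<longrightarrow> \<psi> b = \<psi> b' \<longrightarrow> b = b'"
    proof (intro allI impI)
      fix b b' assume "b \<in> set (filter ?P u)" "b' \<in> set (filter ?P v)" "\<psi> b = \<psi> b'"
      then show "b = b'" using inj[of b b'] by (simp only: set_filter mem_Collect_eq)
    qed
    ultimately show ?thesis by (rule last_inj)
  qed
  have S: "yx y x u \<longleftrightarrow> yx y x v" using a evalw_A[OF assms(6) assms(3)] evalw_A[OF assms(6) assms(4)] by simp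
  show ?thesis using H L S by simp
qed



definition emit :: "(nat \<Rightarrow> nat) \<Rightarrow> nat \<Rightarrow> bool \<Rightarrow> bool \<Rightarrow> word" where
  "emit c b inpre inpost = (if inpre then (if inpost then [] else [b])
     else (if inpost then replicate (c b - 1) b else [b]))"

fun g :: "(nat \<Rightarrow> nat) \<Rightarrow> word \<Rightarrow> word \<Rightarrow> word \<Rightarrow> word" where
  "g c pre [] post = []"
| "g c pre (b # s) post = emit c b (b \<in> set pre) (b \<in> set s \<or> b \<in> set post) @ g c (pre @ [b]) s post"

lemma g_append: "g c pre (s1 @ s2) post = g c pre s1 (s2 @ post) @ g c (pre @ s1) s2 post"
  by (induction s1 arbitrary: pre) auto

lemma g_cong:
  assumes "\<forall>b\<in>set s. (b \<in> set pre \<longleftrightarrow> b \<in> set pre')"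
    and "\<forall>b\<in>set s. (b \<in> set post \<longleftrightarrow> b \<in> set post')"
    and "\<forall>b\<in>set s. c b = c' b \<or> b \<in> set pre \<or> (count_list s b = 1 \<and> b \<notin> set post)"
  shows "g c pre s post = g c' pre' s post'"
  using assms
proof (induction s arbitrary: pre pre')
  case Nil then show ?case by simp
next
  case (Cons b s)
  have e: "emit c b (b \<in> set pre) (b \<in> set s \<or> b \<in> set post) = emit c' b (b \<in> set pre') (b \<in> set s \<or> b \<in> set post')"
    using Cons.prems by (auto simp: emit_def count_list_0_iff)
  have "g c (pre @ [b]) s post = g c' (pre' @ [b]) s post'"
    apply (rule Cons.IH)
    using Cons.prems by (auto split: if_splits)
  then show ?case using e by simp
qed

lemma set_emit: "set (emit c b p q) \<subseteq> {b}"
  by (auto simp: emit_def)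

lemma g_filter: "filter P (g c pre s post) = g c (filter P pre) (filter P s) (filter P post)"
proof (induction s arbitrary: pre)
  case Nil then show ?case by simp
next
  case (Cons b s)
  show ?case
  proof (cases "P b")
    case True
    have "filter P (emit c b (b \<in> set pre) (b \<in> set s \<or> b \<in> set post)) = emit c b (b \<in> set pre) (b \<in> set s \<or> b \<in> set post)"
      using set_emit[of c b] True by (auto intro!: filter_True)
    then show ?thesis using Cons True by simp
  next
    case False
    have "filter P (emit c b (b \<in> set pre) (b \<in> set s \<or> b \<in> set post)) = []"
      using set_emit[of c b] False by (auto intro!: filter_False)
    then show ?thesis using Cons False by simp
  qed
qed

lemma g_ne: "s \<noteq> [] \<Longrightarrow> g c pre s [] \<noteq> []"
proof (induction s arbitrary: pre)
  case Nil then show ?case by simp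
next
  case (Cons b s)
  show ?case
  proof (cases "s = []")
    case True then show ?thesis by (simp add: emit_def)
  next
    case False then show ?thesis using Cons.IH by simp
  qed
qed

lemma determ:
  assumes "\<forall>x y. filter (\<lambda>z. z = x \<or> z = y) u = filter (\<lambda>z. z = x \<or> z = y) v"
  shows "u = v"
  using assms
proof (induction u arbitrary: v)
  case Nil
  show ?case
  proof (cases v)
    case (Cons b v') then show ?thesis using Nil[rule_format, of b b] by simp
  qed simp
next
  case (Cons a u)
  show ?case
  proof (cases v)
    case Nil then show ?thesis using Cons.prems[rule_format, of a a] by simp
  next
    case (Cons b v')
    from Cons.prems[rule_format, of a b] Cons have ab: "a = b" by simp
    have "\<forall>x y. filter (\<lambda>z. z = x \<or> z = y) u = filter (\<lambda>z. z = x \<or> z = y) v'"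
    proof (intro allI)
      fix x y show "filter (\<lambda>z. z = x \<or> z = y) u = filter (\<lambda>z. z = x \<or> z = y) v'"
        using Cons.prems[rule_format, of x y] \<open>v = b # v'\<close> ab by (auto split: if_splits)
    qed
    then show ?thesis using Cons.IH ab \<open>v = b # v'\<close> by simp
  qed
qed

lemma g_rep_in: "x \<in> set pre \<Longrightarrow> g c pre (replicate k x) post = (if k \<noteq> 0 \<and> x \<notin> set post then [x] else [])"
  by (induction k arbitrary: pre) (auto simp: emit_def)

lemma g_rep_first:
  assumes "1 \<le> a" "x \<notin> set pre"
  shows "g c pre (replicate a x) post = (if a = 1 \<and> x \<notin> set post then [x] else replicate (c x - 1) x)
     @ (if 2 \<le> a \<and> x \<notin> set post then [x] else [])"
proof -
  obtain k where a: "a = Suc k" using assms(1) by (cases a) auto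
  show ?thesis using assms a by (auto simp: emit_def g_rep_in)
qed

lemma g_two_last:
  assumes "x \<noteq> y" "set r \<subseteq> {x, y}" "x \<in> set pre" "y \<in> set pre"
  shows "g c pre r [] = (if x \<in> set r \<and> y \<in> set r then (if last r = x then [y, x] else [x, y])
      else if x \<in> set r then [x] else if y \<in> set r then [y] else [])"
  using assms
proof (induction r arbitrary: pre)
  case Nil then show ?case by simp
next
  case (Cons b r)
  have IH: "g c (pre @ [b]) r [] = (if x \<in> set r \<and> y \<in> set r then (if last r = x then [y, x] else [x, y])
      else if x \<in> set r then [x] else if y \<in> set r then [y] else [])"
    using Cons by auto
  have bin: "b \<in> set pre" using Cons.prems by auto
  have l1: "r \<noteq> [] \<Longrightarrow> last r \<in> set r" by simp
  have rs: "set r \<subseteq> {x, y}" using Cons.prems(2) by auto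
  have l2: "r \<noteq> [] \<Longrightarrow> last r = x \<or> last r = y" using l1 rs by blast
  show ?case using IH bin Cons.prems l1 l2 by (auto simp: emit_def)
qed

lemma decomp:
  assumes "set p \<subseteq> {x, y}" "x \<noteq> y" "p \<noteq> []" "hd p = x" "y \<in> set p"
  shows "\<exists>a r. 1 \<le> a \<and> p = replicate a x @ y # r"
  using assms
proof (induction p)
  case Nil then show ?case by simp
next
  case (Cons b p)
  then have b: "b = x" by simp
  show ?case
  proof (cases p)
    case Nil then show ?thesis using Cons b by auto
  next
    case (Cons b' p')
    show ?thesis
    proof (cases "b' = x")
      case True
      then obtain a r where "1 \<le> a" "p = replicate a x @ y # r"
        using Cons.IH Cons.prems \<open>p = b' # p'\<close> b by auto
      then show ?thesis using b by (intro exI[of _ "Suc a"] exI[of _ r]) auto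
    next
      case False
      then have "b' = y" using Cons.prems \<open>p = b' # p'\<close> by auto
      then show ?thesis using b \<open>p = b' # p'\<close> by (intro exI[of _ 1] exI[of _ p']) auto
    qed
  qed
qed

lemma yx_app: "yx y x (s1 @ s2) \<longleftrightarrow> yx y x s1 \<or> yx y x s2 \<or> (y \<in> set s1 \<and> x \<in> set s2)"
  by (induction s1) auto

lemma yx_set: "yx y x w \<Longrightarrow> x \<in> set w"
  by (induction w) auto

lemma yx_rep: "x \<noteq> y \<Longrightarrow> \<not> yx y x (replicate a x)"
  by (induction a) auto

lemma count_rep: "count_list (replicate a x) x = a"
  by (induction a) auto

lemma pair_form:
  assumes "x \<noteq> y" "set p \<subseteq> {x, y}" "p \<noteq> []" "hd p = x" "y \<in> set p"
  shows "g c [] p [] =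
    (if \<not> 2 \<le> count_list p x then [x] else replicate (c x - 1) x)
    @ (if 2 \<le> count_list p x \<and> \<not> yx y x p then [x] else [])
    @ (if 2 \<le> count_list p y then replicate (c y - 1) y else [y])
    @ (if yx y x p \<and> 2 \<le> count_list p y then (if last p = x then [y, x] else [x, y])
       else if yx y x p then [x] else if 2 \<le> count_list p y then [y] else [])"
proof -
  obtain a r where ar: "1 \<le> a" "p = replicate a x @ y # r" using decomp[OF assms(2,1,3,4,5)] by blast
  have rs: "set r \<subseteq> {x, y}" using assms(2) ar by auto
  have cx: "count_list p x = a + count_list r x" using ar assms(1) by (simp add: count_rep)
  have cy: "count_list p y = 1 + count_list r y" using ar assms(1) by simp
  have yxp: "yx y x p \<longleftrightarrow> x \<in> set r" using ar assms(1) by (auto simp: yx_app yx_rep dest: yx_set)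
  have lp: "r \<noteq> [] \<Longrightarrow> last p = last r" using ar by simp
  have g1: "g c [] p [] = g c [] (replicate a x) (y # r) @ g c (replicate a x) (y # r) []"
    using ar g_append[of c "[]" "replicate a x" "y # r" "[]"] by simp
  have g2: "g c [] (replicate a x) (y # r) = (if a = 1 \<and> x \<notin> set r then [x] else replicate (c x - 1) x)
     @ (if 2 \<le> a \<and> x \<notin> set r then [x] else [])"
    using g_rep_first[OF ar(1), where x=x and pre="[]" and c=c and post="y # r"] assms(1) by simp
  have g3: "g c (replicate a x) (y # r) [] = (if y \<in> set r then replicate (c y - 1) y else [y])
     @ g c (replicate a x @ [y]) r []"
    using assms(1) by (simp add: emit_def)
  have g4: "g c (replicate a x @ [y]) r [] = (if x \<in> set r \<and> y \<in> set r then (if last r = x then [y, x] else [x, y])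
      else if x \<in> set r then [x] else if y \<in> set r then [y] else [])"
    using g_two_last[OF assms(1) rs] ar(1) by simp
  have cr: "count_list r x = 0 \<longleftrightarrow> x \<notin> set r" "count_list r y = 0 \<longleftrightarrow> y \<notin> set r"
    by (simp_all add: count_list_0_iff)
  show ?thesis
  proof (cases "r = []")
    case True then show ?thesis unfolding g1 g2 g3 g4 yxp cx cy using ar(1) by auto
  next
    case False
    then have "last p = last r" using lp by simp
    then show ?thesis unfolding g1 g2 g3 g4 yxp cx cy using ar(1) cr
      by (cases "count_list r x"; cases "count_list r y") auto
  qed
qed

lemma filter_single: "filter (\<lambda>z. z = x) w = replicate (count_list w x) x"
  by (induction w) auto

lemma g_single: "g c [] (replicate k x) [] = (if k = 0 then [] else if k = 1 then [x] else replicate (c x - 1) x @ [x])"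
proof (cases k)
  case 0 then show ?thesis by simp
next
  case (Suc j) then show ?thesis using g_rep_first[where a=k and x=x and pre="[]" and c=c and post="[]"] by auto
qed



lemma count_filter: "P x \<Longrightarrow> count_list (filter P w) x = count_list w x"
  by (induction w) auto

lemma yx_filter: "P x \<Longrightarrow> P y \<Longrightarrow> yx y x (filter P w) = yx y x w"
  by (induction w) auto

lemma filter_notin: "y \<notin> set w \<Longrightarrow> filter (\<lambda>z. z = x \<or> z = y) w = replicate (count_list w x) x"
proof -
  assume "y \<notin> set w"
  then have "filter (\<lambda>z. z = x \<or> z = y) w = filter (\<lambda>z. z = x) w" by (intro filter_cong) auto
  then show ?thesis by (simp add: filter_single)
qed

lemma filter_swap: "filter (\<lambda>z. z = x \<or> z = y) w = filter (\<lambda>z. z = y \<or> z = x) w"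
  by (intro filter_cong) auto

lemma single_eq:
  assumes "count_list u x = 0 \<longleftrightarrow> count_list v x = 0" "2 \<le> count_list u x \<longleftrightarrow> 2 \<le> count_list v x"
  shows "g c [] (replicate (count_list u x) x) [] = g c [] (replicate (count_list v x) x) []"
proof -
  have "count_list u x = 1 \<longleftrightarrow> count_list v x = 1" using assms by auto
  then show ?thesis using assms unfolding g_single by auto
qed

lemma pair_case:
  assumes "x \<noteq> y" "y \<in> set u" "y \<in> set v" "filter (\<lambda>z. z = x \<or> z = y) u \<noteq> []"
    "filter (\<lambda>z. z = x \<or> z = y) v \<noteq> []"
    "hd (filter (\<lambda>z. z = x \<or> z = y) u) = x" "hd (filter (\<lambda>z. z = x \<or> z = y) v) = x"
    "2 \<le> count_list u x \<longleftrightarrow> 2 \<le> count_list v x" "2 \<le> count_list u y \<longleftrightarrow> 2 \<le> count_list v y"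
    "last (filter (\<lambda>z. z = x \<or> z = y) u) = last (filter (\<lambda>z. z = x \<or> z = y) v)"
    "yx y x u \<longleftrightarrow> yx y x v"
  shows "g c [] (filter (\<lambda>z. z = x \<or> z = y) u) [] = g c [] (filter (\<lambda>z. z = x \<or> z = y) v) []"
proof -
  let ?P = "\<lambda>z. z = x \<or> z = y"
  have su: "set (filter ?P u) \<subseteq> {x, y}" "set (filter ?P v) \<subseteq> {x, y}" by auto
  have yu: "y \<in> set (filter ?P u)" "y \<in> set (filter ?P v)" using assms(2,3) by auto
  note fu = pair_form[OF assms(1) su(1) assms(4) assms(6) yu(1), of c]
  note fv = pair_form[OF assms(1) su(2) assms(5) assms(7) yu(2), of c]
  have cnt: "count_list (filter ?P u) x = count_list u x" "count_list (filter ?P v) x = count_list v x"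
    "count_list (filter ?P u) y = count_list u y" "count_list (filter ?P v) y = count_list v y"
    by (simp_all add: count_filter)
  have yy: "yx y x (filter ?P u) = yx y x u" "yx y x (filter ?P v) = yx y x v"
    by (simp_all add: yx_filter)
  show ?thesis unfolding fu fv cnt yy using assms(8-11) by simp
qed

lemma NF_eq:
  assumes hc1: "\<forall>x. count_list u x = 0 \<longleftrightarrow> count_list v x = 0"
    and hc2: "\<forall>x. 2 \<le> count_list u x \<longleftrightarrow> 2 \<le> count_list v x"
    and hh: "\<forall>x y. x \<noteq> y \<longrightarrow> hd (filter (\<lambda>z. z = x \<or> z = y) u) = hd (filter (\<lambda>z. z = x \<or> z = y) v)"
    and hl: "\<forall>x y. x \<noteq> y \<longrightarrow> last (filter (\<lambda>z. z = x \<or> z = y) u) = last (filter (\<lambda>z. z = x \<or> z = y) v)"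
    and hs: "\<forall>x y. x \<noteq> y \<longrightarrow> (yx y x u \<longleftrightarrow> yx y x v)"
  shows "g c [] u [] = g c [] v []"
proof (rule determ, intro allI)
  fix x y :: nat
  let ?P = "\<lambda>z. z = x \<or> z = y"
  have fg: "\<And>w. filter ?P (g c [] w []) = g c [] (filter ?P w) []" by (simp add: g_filter)
  have mem: "\<And>z. z \<in> set u \<longleftrightarrow> z \<in> set v" using hc1 by (simp add: count_list_0_iff)
  show "filter ?P (g c [] u []) = filter ?P (g c [] v [])"
    unfolding fg
  proof (cases "x = y \<or> y \<notin> set u")
    case True
    then have "y \<notin> set u \<and> y \<notin> set v \<or> x = y" using mem by auto
    then have e: "filter ?P u = replicate (count_list u x) x \<and> filter ?P v = replicate (count_list v x) x"
      by (auto simp: filter_notin filter_single)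
    show "g c [] (filter ?P u) [] = g c [] (filter ?P v) []"
      unfolding e[THEN conjunct1] e[THEN conjunct2]
      by (rule single_eq[OF hc1[rule_format] hc2[rule_format]])
  next
    case False
    then have xy: "x \<noteq> y" "y \<in> set u" "y \<in> set v" using mem by auto
    show "g c [] (filter ?P u) [] = g c [] (filter ?P v) []"
    proof (cases "x \<in> set u")
      case False
      then have "x \<notin> set v" using mem by auto
      then have e: "filter ?P u = replicate (count_list u y) y \<and> filter ?P v = replicate (count_list v y) y"
        using False filter_notin[of x u y] filter_notin[of x v y] filter_swap[of x y] by metis
      show ?thesis
        unfolding e[THEN conjunct1] e[THEN conjunct2]
        by (rule single_eq[OF hc1[rule_format] hc2[rule_format]])
    next
      case True
      then have xv: "x \<in> set v" using mem by auto
      have xu: "x \<in> set u" using True .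
      have ne: "filter ?P u \<noteq> []" "filter ?P v \<noteq> []" using xy by (auto simp: filter_empty_conv)
      have hdin: "hd (filter ?P u) \<in> set (filter ?P u)" using ne(1) by (rule hd_in_set)
      then have dj: "hd (filter ?P u) = x \<or> hd (filter ?P u) = y" by simp
      have hde: "hd (filter ?P u) = hd (filter ?P v)" using hh xy by simp
      show ?thesis
      proof (cases "hd (filter ?P u) = x")
        case True
        note hx = True
        show ?thesis
          apply (rule pair_case[OF xy ne hx])
          using hx hde hc2 hl hs xy by auto
      next
        case False
        then have hy: "hd (filter ?P u) = y" using dj by simp
        have sw: "\<And>w. filter ?P w = filter (\<lambda>z. z = y \<or> z = x) w" by (rule filter_swap)
        have "g c [] (filter (\<lambda>z. z = y \<or> z = x) u) [] = g c [] (filter (\<lambda>z. z = y \<or> z = x) v) []"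
          apply (rule pair_case)
          using hy hde hc2 hl hs xy xu xv ne unfolding sw by auto
        then show ?thesis unfolding sw .
      qed
    qed
  qed
qed



lemma ctx:
  assumes "derivable S u v"
  shows "derivable S (P @ u @ R) (P @ v @ R)"
proof -
  have 1: "derivable S (u @ R) (v @ R)"
    using assms by (cases "R = []") (auto intro: derivable.multr)
  show ?thesis
    using 1 by (cases "P = []") (auto intro: derivable.multl)
qed

lemma concat_rep: "concat (replicate k [a]) = replicate k a"
  by (induction k) auto

lemma sub_rep: "\<sigma> 0 = [a] \<Longrightarrow> substw \<sigma> (replicate k 0) = replicate k a"
  by (induction k) (auto simp: substw_def)

lemma move_core:
  "derivable (Sigma_mn m n) ([a] @ Q @ [a] @ S @ [a]) ([a, a] @ Q @ S @ [a])"
proof (cases "Q = []")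
  case True then show ?thesis by (auto intro: derivable.refl)
next
  case Qne: False
  show ?thesis
  proof (cases "S = []")
    case True
    define \<sigma> where "\<sigma> = (\<lambda>i::nat. if i = 0 then [a] else Q)"
    have s: "\<forall>x. \<sigma> x \<noteq> []" using Qne by (simp add: \<sigma>_def)
    have "derivable (Sigma_mn m n) [0, 0, 1, 0] [0, 1, 0, 0]"
      by (rule derivable.ax) (simp add: Sigma_mn_def)
    from derivable.subst[OF this s] have "derivable (Sigma_mn m n) ([a, a] @ Q @ [a]) ([a] @ Q @ [a, a])"
      by (simp add: substw_def \<sigma>_def)
    then show ?thesis using True by (auto intro: derivable.sym)
  next
    case False
    define \<sigma> where "\<sigma> = (\<lambda>i::nat. if i = 0 then [a] else if i = 1 then Q else S)"
    have s: "\<forall>x. \<sigma> x \<noteq> []" using Qne False by (simp add: \<sigma>_def)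
    have "derivable (Sigma_mn m n) [0, 1, 0, 2, 0] [0, 0, 1, 2, 0]"
      by (rule derivable.ax) (simp add: Sigma_mn_def)
    from derivable.subst[OF this s] show ?thesis
      by (simp add: substw_def \<sigma>_def)
  qed
qed

lemma move:
  assumes "2 \<le> k"
  shows "derivable (Sigma_mn m n) (replicate (k - 1) a @ Q @ [a] @ S @ [a]) (replicate k a @ Q @ S @ [a])"
proof -
  define j where "j = k - 2"
  have kj: "k = Suc (Suc j)" using assms unfolding j_def by simp
  have r1: "replicate (k - 1) a = replicate (k - 2) a @ [a]"
    unfolding kj by (simp add: replicate_append_same)
  have r2: "replicate k a = replicate (k - 2) a @ [a, a]"
    unfolding kj by (simp, induction j) auto
  show ?thesis unfolding r1 r2
    using ctx[OF move_core[of m n a Q S], of "replicate (k - 2) a" "[]"] by simp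
qed

lemma reduce_core:
  assumes "1 \<le> m" "2 \<le> n" "m + n \<le> k"
  shows "derivable (Sigma_mn m n) (replicate (k - 1) a @ Q @ [a]) (replicate (k - 1 - m) a @ Q @ [a])"
proof -
  define j where "j = k - (m + n)"
  show ?thesis
  proof (cases "j = 0 \<and> Q = []")
    case True
    then have k: "k = m + n" using assms j_def by simp
    define \<sigma> where "\<sigma> = (\<lambda>i::nat. [a])"
    have s: "\<forall>x. \<sigma> x \<noteq> []" by (simp add: \<sigma>_def)
    have "derivable (Sigma_mn m n) (replicate (m + n) 0) (replicate n 0)"
      by (rule derivable.ax) (simp add: Sigma_mn_def)
    from derivable.subst[OF this s] have "derivable (Sigma_mn m n) (replicate (m + n) a) (replicate n a)"
      by (simp add: sub_rep \<sigma>_def)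
    moreover have "replicate (k - 1) a @ Q @ [a] = replicate (m + n) a"
    proof -
      have "k = Suc (k - 1)" using k assms by simp
      then have "replicate k a = replicate (k - 1) a @ [a]" by (metis replicate_Suc replicate_append_same)
      then show ?thesis using True k by simp
    qed
    moreover have "replicate (k - 1 - m) a @ Q @ [a] = replicate n a"
    proof -
      have "n = Suc (k - 1 - m)" using k assms by simp
      then have "replicate n a = replicate (k - 1 - m) a @ [a]" by (metis replicate_Suc replicate_append_same)
      then show ?thesis using True by simp
    qed
    ultimately show ?thesis by simp
  next
    case False
    define Y where "Y = replicate j a @ Q"
    have Yne: "Y \<noteq> []" using False by (simp add: Y_def)
    define \<sigma> where "\<sigma> = (\<lambda>i::nat. if i = 0 then [a] else Y)"
    have s: "\<forall>x. \<sigma> x \<noteq> []" using Yne by (simp add: \<sigma>_def)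
    have "derivable (Sigma_mn m n) (replicate (m + n - 1) 0 @ [1, 0]) (replicate (n - 1) 0 @ [1, 0])"
      by (rule derivable.ax) (simp add: Sigma_mn_def)
    from derivable.subst[OF this s]
    have "derivable (Sigma_mn m n) (replicate (m + n - 1) a @ Y @ [a]) (replicate (n - 1) a @ Y @ [a])"
      by (simp add: substw_def \<sigma>_def sub_rep[unfolded substw_def] concat_rep)
    moreover have "replicate (m + n - 1) a @ Y = replicate (k - 1) a @ Q"
      using assms unfolding Y_def j_def by (simp add: replicate_add[symmetric])
    moreover have "replicate (n - 1) a @ Y = replicate (k - 1 - m) a @ Q"
      using assms unfolding Y_def j_def by (simp add: replicate_add[symmetric])
    ultimately show ?thesis by (metis append.assoc)
  qed
qed



lemma g_dec1: "g c pre (w1 @ a # w3) post = g c pre w1 (a # w3 @ post)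
   @ emit c a (a \<in> set pre \<or> a \<in> set w1) (a \<in> set w3 \<or> a \<in> set post) @ g c (pre @ w1 @ [a]) w3 post"
  by (simp add: g_append)

lemma g_dec2: "g c pre (w1 @ a # w2 @ a # w3) post = g c pre w1 (a # w2 @ a # w3 @ post)
   @ emit c a (a \<in> set pre \<or> a \<in> set w1) True @ g c (pre @ w1 @ [a]) w2 (a # w3 @ post)
   @ emit c a True (a \<in> set w3 \<or> a \<in> set post) @ g c (pre @ w1 @ a # w2 @ [a]) w3 post"
  using g_dec1[of c pre w1 a "w2 @ a # w3" post] g_dec1[of c "pre @ w1 @ [a]" w2 a w3 post]
  by simp

lemma decomp2:
  assumes "2 \<le> count_list w a"
  obtains w1 w2 w3 where "w = w1 @ a # w2 @ a # w3" "a \<notin> set w1" "a \<notin> set w3"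
proof -
  have "a \<in> set w" using assms by (metis count_notin not_numeral_le_zero)
  then obtain w1 r where 1: "w = w1 @ a # r" "a \<notin> set w1" by (metis split_list_first)
  then have "count_list r a \<ge> 1" using assms by simp
  then have "a \<in> set r" by (metis count_notin not_one_le_zero)
  then obtain w2 w3 where 2: "r = w2 @ a # w3" "a \<notin> set w3" by (metis split_list_last)
  show ?thesis using that 1 2 by blast
qed

lemma gather:
  "w \<noteq> [] \<Longrightarrow> derivable (Sigma_mn m n) w (g (count_list w) [] w [])"
proof (induction w rule: rev_induct)
  case Nil then show ?case by simp
next
  case (snoc a w')
  let ?S = "Sigma_mn m n"
  let ?c = "count_list (w' @ [a])" and ?c' = "count_list w'"
  show ?case
  proof (cases "w' = []")
    case True then show ?thesis by (simp add: emit_def derivable.refl)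
  next
    case wne: False
    have D1: "derivable ?S (w' @ [a]) (g ?c' [] w' [] @ [a])"
      using snoc.IH[OF wne] by (rule derivable.multr) simp
    have gne: "g ?c' [] w' [] \<noteq> []" using g_ne[OF wne] .
    have D2: "derivable ?S (g ?c' [] w' [] @ [a]) (g ?c [] (w' @ [a]) [])"
    proof (cases "a \<in> set w'")
      case False
      have "g ?c [] (w' @ [a]) [] = g ?c [] w' [a] @ [a]"
        using False by (simp add: g_append emit_def)
      moreover have "g ?c [] w' [a] = g ?c' [] w' []"
        by (rule g_cong) (use False in auto)
      ultimately show ?thesis using gne by (simp add: derivable.refl)
    next
      case True
      show ?thesis
      proof (cases "count_list w' a = 1")
        case c1: True
        obtain w1 w3 where w: "w' = w1 @ a # w3" "a \<notin> set w1"
          using True by (metis split_list_first)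
        have a3: "a \<notin> set w3" using c1 w by (simp add: count_list_0_iff)
        have e1: "g ?c' [] w' [] = g ?c' [] w1 (a # w3) @ [a] @ g ?c' (w1 @ [a]) w3 []"
          using g_dec1[of ?c' "[]" w1 a w3 "[]"] w a3 by (simp add: emit_def)
        have ca: "?c a = 2" using c1 by simp
        have e2: "g ?c [] (w' @ [a]) [] = g ?c [] w1 (a # w3 @ [a]) @ [a] @ g ?c (w1 @ [a]) w3 [a] @ [a]"
          using g_dec1[of ?c "[]" w1 a "w3 @ [a]" "[]"] w a3 ca
          by (simp add: emit_def g_append)
        have q1: "g ?c [] w1 (a # w3 @ [a]) = g ?c' [] w1 (a # w3)"
          by (rule g_cong) (use w in auto)
        have q2: "g ?c (w1 @ [a]) w3 [a] = g ?c' (w1 @ [a]) w3 []"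
          by (rule g_cong) (use a3 in auto)
        show ?thesis unfolding e1 e2 q1 q2 using gne e1 by (simp add: derivable.refl)
      next
        case c2: False
        have "count_list w' a \<noteq> 0" using True by (simp add: count_list_0_iff)
        then have ge2: "2 \<le> count_list w' a" using c2 by linarith
        obtain w1 w2 w3 where w: "w' = w1 @ a # w2 @ a # w3" "a \<notin> set w1" "a \<notin> set w3"
          using decomp2[OF ge2] by blast
        define k where "k = count_list w' a"
        have k2: "2 \<le> k" using ge2 k_def by simp
        have cak: "?c a = Suc k" using k_def by simp
        have e1: "g ?c' [] w' [] = g ?c' [] w1 (a # w2 @ a # w3) @ replicate (k - 1) a
            @ g ?c' (w1 @ [a]) w2 (a # w3) @ [a] @ g ?c' (w1 @ a # w2 @ [a]) w3 []"
          using g_dec2[of ?c' "[]" w1 a w2 w3 "[]"] w k_def by (simp add: emit_def)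
        have e2: "g ?c [] (w' @ [a]) [] = g ?c [] w1 (a # w2 @ a # w3 @ [a]) @ replicate k a
            @ g ?c (w1 @ [a]) w2 (a # w3 @ [a]) @ g ?c (w1 @ a # w2 @ [a]) w3 [a] @ [a]"
          using g_dec2[of ?c "[]" w1 a w2 "w3 @ [a]" "[]"] w cak by (simp add: emit_def g_append)
        have q1: "g ?c [] w1 (a # w2 @ a # w3 @ [a]) = g ?c' [] w1 (a # w2 @ a # w3)"
          by (rule g_cong) (use w in auto)
        have q2: "g ?c (w1 @ [a]) w2 (a # w3 @ [a]) = g ?c' (w1 @ [a]) w2 (a # w3)"
          by (rule g_cong) auto
        have q3: "g ?c (w1 @ a # w2 @ [a]) w3 [a] = g ?c' (w1 @ a # w2 @ [a]) w3 []"
          by (rule g_cong) (use w in auto)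
        show ?thesis unfolding e1 e2 q1 q2 q3
          using ctx[OF move[OF k2, of m n a "g ?c' (w1 @ [a]) w2 (a # w3)" "g ?c' (w1 @ a # w2 @ [a]) w3 []"],
              of "g ?c' [] w1 (a # w2 @ a # w3)" "[]"]
          by simp
      qed
    qed
    show ?thesis using derivable.trans[OF D1 D2] .
  qed
qed



lemma reduce_step:
  assumes "1 \<le> m" "2 \<le> n" "2 \<le> count_list w a" "m + n \<le> c a"
  shows "derivable (Sigma_mn m n) (g c [] w []) (g (c(a := c a - m)) [] w [])"
proof -
  obtain w1 w2 w3 where w: "w = w1 @ a # w2 @ a # w3" "a \<notin> set w1" "a \<notin> set w3"
    using decomp2[OF assms(3)] by blast
  let ?c = "c(a := c a - m)"
  define A where "A = g c [] w1 (a # w2 @ a # w3)"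
  define Q where "Q = g c (w1 @ [a]) w2 (a # w3)"
  define S where "S = g c (w1 @ a # w2 @ [a]) w3 []"
  have e1: "g c [] w [] = A @ replicate (c a - 1) a @ Q @ [a] @ S"
    using g_dec2[of c "[]" w1 a w2 w3 "[]"] w unfolding A_def Q_def S_def by (simp add: emit_def)
  have e2: "g ?c [] w [] = g ?c [] w1 (a # w2 @ a # w3) @ replicate (c a - m - 1) a
     @ g ?c (w1 @ [a]) w2 (a # w3) @ [a] @ g ?c (w1 @ a # w2 @ [a]) w3 []"
    using g_dec2[of ?c "[]" w1 a w2 w3 "[]"] w by (simp add: emit_def)
  have q1: "g ?c [] w1 (a # w2 @ a # w3) = A" unfolding A_def
    by (rule g_cong) (use w in auto)
  have q2: "g ?c (w1 @ [a]) w2 (a # w3) = Q" unfolding Q_def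
    by (rule g_cong) auto
  have q3: "g ?c (w1 @ a # w2 @ [a]) w3 [] = S" unfolding S_def
    by (rule g_cong) (use w in auto)
  have ar: "c a - m - 1 = c a - 1 - m" by simp
  show ?thesis unfolding e1 e2 q1 q2 q3 ar
    using ctx[OF reduce_core[OF assms(1,2,4), of a Q], of A S] by simp
qed

lemma red_small: "k < m + n \<Longrightarrow> red m n k = k"
  by (simp add: red_def)

lemma red_shift: "m + n \<le> k \<Longrightarrow> red m n (k - m) = red m n k"
proof -
  assume h: "m + n \<le> k"
  have "k - n = (k - m - n) + m" using h by simp
  then have "(k - n) mod m = (k - m - n) mod m" by simp
  then show ?thesis using h by (simp add: red_def)
qed

lemma reduce_all:
  assumes "1 \<le> m" "2 \<le> n" "w \<noteq> []"
  shows "(\<forall>a. 2 \<le> count_list w a \<longrightarrow> 2 \<le> c a) \<Longrightarrow>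
    derivable (Sigma_mn m n) (g c [] w []) (g (\<lambda>a. red m n (c a)) [] w [])"
proof (induction "\<Sum>a\<in>set w. c a" arbitrary: c rule: less_induct)
  case less
  show ?case
  proof (cases "\<exists>a. 2 \<le> count_list w a \<and> m + n \<le> c a")
    case True
    then obtain a where a: "2 \<le> count_list w a" "m + n \<le> c a" by blast
    let ?c = "c(a := c a - m)"
    have D1: "derivable (Sigma_mn m n) (g c [] w []) (g ?c [] w [])"
      by (rule reduce_step[where c=c, OF assms(1,2) a])
    have aw: "a \<in> set w" using a(1) by (metis count_notin not_numeral_le_zero)
    have lt: "(\<Sum>b\<in>set w. ?c b) < (\<Sum>b\<in>set w. c b)"
      by (rule sum_strict_mono_ex1) (use aw a assms(1) in auto)
    have cond: "\<forall>b. 2 \<le> count_list w b \<longrightarrow> 2 \<le> ?c b" using less.prems a assms by auto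
    have D2: "derivable (Sigma_mn m n) (g ?c [] w []) (g (\<lambda>b. red m n (?c b)) [] w [])"
      using less.hyps[OF lt cond] .
    have "(\<lambda>b. red m n (?c b)) = (\<lambda>b. red m n (c b))"
      using red_shift[OF a(2)] by auto
    then show ?thesis using derivable.trans[OF D1 D2] by simp
  next
    case False
    have "g c [] w [] = g (\<lambda>a. red m n (c a)) [] w []"
    proof (rule g_cong)
      show "\<forall>b\<in>set w. c b = red m n (c b) \<or> b \<in> set [] \<or> (count_list w b = 1 \<and> b \<notin> set [])"
      proof
        fix b assume b: "b \<in> set w"
        show "c b = red m n (c b) \<or> b \<in> set [] \<or> (count_list w b = 1 \<and> b \<notin> set [])"
        proof (cases "2 \<le> count_list w b")
          case True then show ?thesis using False red_small[of "c b" m n] by auto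
        next
          case f: False
          have "count_list w b \<noteq> 0" using b by (simp add: count_list_0_iff)
          then show ?thesis using f by simp
        qed
      qed
    qed auto
    then show ?thesis using g_ne[OF assms(3)] by (simp add: derivable.refl)
  qed
qed

lemma completeness:
  assumes "1 \<le> m" "2 \<le> n" "u \<noteq> []" "v \<noteq> []" "satisfies (prod_carrier m n) (prod_mult m n) u v"
  shows "derivable (Sigma_mn m n) u v"
proof -
  note ec = extract_count[OF assms]
  have hc1: "\<forall>x. count_list u x = 0 \<longleftrightarrow> count_list v x = 0"
  proof
    fix x have "min (count_list u x) n = min (count_list v x) n" using ec by blast
    then show "count_list u x = 0 \<longleftrightarrow> count_list v x = 0" using assms(2) by (auto simp: min_def split: if_splits)
  qed
  have hc2: "\<forall>x. 2 \<le> count_list u x \<longleftrightarrow> 2 \<le> count_list v x"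
  proof
    fix x have "min (count_list u x) n = min (count_list v x) n" using ec by blast
    then show "2 \<le> count_list u x \<longleftrightarrow> 2 \<le> count_list v x" using assms(2) by (auto simp: min_def split: if_splits)
  qed
  have hred: "(\<lambda>a. red m n (count_list u a)) = (\<lambda>a. red m n (count_list v a))"
  proof
    fix a show "red m n (count_list u a) = red m n (count_list v a)"
      using ec[of a] by (intro red_eq) auto
  qed
  have hh: "\<forall>x y. x \<noteq> y \<longrightarrow> hd (filter (\<lambda>z. z = x \<or> z = y) u) = hd (filter (\<lambda>z. z = x \<or> z = y) v)"
    using extract_pair[OF assms] by blast
  have hl: "\<forall>x y. x \<noteq> y \<longrightarrow> last (filter (\<lambda>z. z = x \<or> z = y) u) = last (filter (\<lambda>z. z = x \<or> z = y) v)"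
    using extract_pair[OF assms] by blast
  have hs: "\<forall>x y. x \<noteq> y \<longrightarrow> (yx y x u \<longleftrightarrow> yx y x v)"
    using extract_pair[OF assms] by blast
  let ?cu = "\<lambda>a. red m n (count_list u a)"
  have nf: "g ?cu [] u [] = g ?cu [] v []" by (rule NF_eq[OF hc1 hc2 hh hl hs])
  have du: "derivable (Sigma_mn m n) u (g ?cu [] u [])"
    using derivable.trans[OF gather[OF assms(3)] reduce_all[OF assms(1,2,3), of "count_list u"]] by simp
  have dv: "derivable (Sigma_mn m n) v (g ?cu [] v [])"
    using derivable.trans[OF gather[OF assms(4)] reduce_all[OF assms(1,2,4), of "count_list v"]] hred by simp
  show ?thesis using derivable.trans[OF du] derivable.sym[OF dv] nf by simp
qed

theorem proposition6p5:
  fixes m n :: nat and u v :: word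
  assumes "m \<ge> 1" and "n \<ge> 2" and "u \<noteq> []" and "v \<noteq> []"
  shows "satisfies (prod_carrier m n) (prod_mult m n) u v \<longleftrightarrow> derivable (Sigma_mn m n) u v"
  using completeness[OF assms] soundness[OF assms(1,2)] by blast


end
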